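(* For any rooted binary tree $T$ with $n$ leaves, the height of the modified centroid decomposition satisfies $h(\mathit{MCD}(T))\le 2+2\log_2 n$.
   Context: A rooted binary tree is one in which every internal node has exactly two children, a left and a right child. A component of $T$ is a connected set of nodes of $T$, and $|C|$ denotes the number of nodes of a component $C$. An edge of $T$ crosses the boundary of $C$ if exactly one of its endpoints lies in $C$. It is an edge from below if its endpoint in $C$ is the parent endpoint. A centroid of a component $C$ is a node $u\in C$ such that every connected component of $C\setminus\{u\}$ has at most $|C|/2$ nodes. Removing a node $s$ from $C$ leaves at most three connected components: $C_l$ containing the left child of $s$, $C_r$ containing the right child of $s$, and $C_p$ containing the parent of $s$, each intersected with $C$ and possibly empty. The modified centroid decomposition $\mathit{MCD}(T)$ is a ternary tree built recursively, starting from the component $C=T$. For the current component $C$ a splitting node $s$ is chosen. If $C$ has no edge from below, $s$ is a centroid $c$ of $C$. Otherwise $C$ has exactly one edge $(x,y)$ from below with $x\in C$; let $c$ be a centroid of $C$, and let $s$ be the lowest common ancestor of $x$ and $c$. The node of $\mathit{MCD}(T)$ for $C$ stores $s$. Its children are the nodes of $\mathit{MCD}(T)$ for the nonempty components among $C_l,C_r,C_p$ obtained by removing $s$ from $C$. Every component arising this way has at most one edge from below and at most one edge from above. The height $h(\mathit{MCD}(T))$ is the height of this ternary tree. *)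

theory Defs
  imports Complex_Main
begin

text \<open>Rooted binary trees: every internal node has exactly two children.
  Nodes of a tree are identified with their positions: the list of
  directions (False = left, True = right) from the root.\<close>

datatype bt = Lf | Nd bt bt

fun nodes :: "bt \<Rightarrow> bool list set" where
  "nodes Lf = {[]}"
| "nodes (Nd l r) = insert [] (Cons False ` nodes l \<union> Cons True ` nodes r)"

fun leaves :: "bt \<Rightarrow> nat" where
  "leaves Lf = 1"
| "leaves (Nd l r) = leaves l + leaves r"

definition tadj :: "bool list \<Rightarrow> bool list \<Rightarrow> bool" where
  "tadj u v \<longleftrightarrow> (\<exists>b. v = u @ [b]) \<or> (\<exists>b. u = v @ [b])"

definition is_component :: "bt \<Rightarrow> bool list set \<Rightarrow> bool" where
  "is_component T C \<longleftrightarrow> C \<subseteq> nodes T \<and> C \<noteq> {} \<and>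
     (\<forall>u\<in>C. \<forall>v\<in>C. (u, v) \<in> {(a, b). a \<in> C \<and> b \<in> C \<and> tadj a b}\<^sup>*)"

definition edge_from_below :: "bt \<Rightarrow> bool list set \<Rightarrow> bool list \<Rightarrow> bool list \<Rightarrow> bool" where
  "edge_from_below T C x y \<longleftrightarrow> x \<in> C \<and> y \<notin> C \<and> y \<in> nodes T \<and> (\<exists>b. y = x @ [b])"

text \<open>The pieces left after removing s from C: the components of T minus s
  (left subtree, right subtree, part containing the parent) intersected with C.\<close>
definition piece_l :: "bool list set \<Rightarrow> bool list \<Rightarrow> bool list set" where
  "piece_l C s = {v \<in> C. \<exists>w. v = s @ [False] @ w}"

definition piece_r :: "bool list set \<Rightarrow> bool list \<Rightarrow> bool list set" where
  "piece_r C s = {v \<in> C. \<exists>w. v = s @ [True] @ w}"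

definition piece_p :: "bool list set \<Rightarrow> bool list \<Rightarrow> bool list set" where
  "piece_p C s = {v \<in> C. \<not> (\<exists>w. v = s @ w)}"

definition is_centroid :: "bool list set \<Rightarrow> bool list \<Rightarrow> bool" where
  "is_centroid C u \<longleftrightarrow> u \<in> C \<and>
     (\<forall>P \<in> {piece_l C u, piece_r C u, piece_p C u}. real (card P) \<le> real (card C) / 2)"

fun lca :: "bool list \<Rightarrow> bool list \<Rightarrow> bool list" where
  "lca (a # xs) (b # ys) = (if a = b then a # lca xs ys else [])"
| "lca _ _ = []"

datatype 'a tern = TNode 'a "'a tern list"

fun theight :: "'a tern \<Rightarrow> nat" where
  "theight (TNode x ts) = fold max (map (\<lambda>t. Suc (theight t)) ts) 0"

inductive is_mcd :: "bt \<Rightarrow> bool list set \<Rightarrow> bool list tern \<Rightarrow> bool" for T where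
  "\<lbrakk> is_component T C;
     (\<not> (\<exists>x y. edge_from_below T C x y)) \<and> is_centroid C s
     \<or> (\<exists>x y c. edge_from_below T C x y \<and> is_centroid C c \<and> s = lca x c);
     Ps = filter (\<lambda>P. P \<noteq> {}) [piece_l C s, piece_r C s, piece_p C s];
     length ts = length Ps;
     \<forall>i < length Ps. is_mcd T (Ps ! i) (ts ! i) \<rbrakk>
   \<Longrightarrow> is_mcd T C (TNode s ts)"

end

theory Submission
  imports Defs
begin

lemma lca_prefix: "\<exists>u. x = lca x y @ u"
  by (induction x y rule: lca.induct) auto

lemma lca_prefix2: "\<exists>u. y = lca x y @ u"
  by (induction x y rule: lca.induct) auto

lemma lca_append: "lca (p @ xs) (p @ ys) = p @ lca xs ys"
  by (induction p) auto

lemma finite_nodes: "finite (nodes T)"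
  by (induction T) auto

lemma card_nodes: "card (nodes T) + 1 = 2 * leaves T"
proof (induction T)
  case Lf
  then show ?case by simp
next
  case (Nd l r)
  have d: "Cons False ` nodes l \<inter> Cons True ` nodes r = {}" by auto
  have n: "[] \<notin> Cons False ` nodes l \<union> Cons True ` nodes r" by auto
  have "card (nodes (Nd l r)) = Suc (card (Cons False ` nodes l \<union> Cons True ` nodes r))"
    using n finite_nodes by simp
  also have "\<dots> = Suc (card (Cons False ` nodes l) + card (Cons True ` nodes r))"
    using d finite_nodes by (simp add: card_Un_disjoint)
  also have "\<dots> = Suc (card (nodes l) + card (nodes r))"
    by (simp add: card_image)
  finally show ?case using Nd by simp
qed

lemma fold_max_mem: "fold max xs (a::nat) \<in> insert a (set xs)"
proof (induction xs arbitrary: a)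
  case Nil
  then show ?case by simp
next
  case (Cons x xs)
  have "fold max (x # xs) a = fold max xs (max x a)" by simp
  moreover have "fold max xs (max x a) \<in> insert (max x a) (set xs)" using Cons by blast
  moreover have "max x a \<in> {x, a}" by (simp add: max_def)
  ultimately show ?case by auto
qed

lemma theight_bound:
  assumes "(B::nat) \<ge> 1" "\<forall>t\<in>set ts. 2 ^ Suc (theight t) \<le> B"
  shows "2 ^ theight (TNode s ts) \<le> B"
proof -
  have "theight (TNode s ts) \<in> insert 0 (set (map (\<lambda>t. Suc (theight t)) ts))"
    using fold_max_mem[of "map (\<lambda>t. Suc (theight t)) ts" 0] by simp
  then show ?thesis using assms by auto
qed

abbreviation efb where "efb T C \<equiv> (\<exists>x y. edge_from_below T C x y)"

lemma efb_l: "edge_from_below T (piece_l C s) x y \<Longrightarrow> edge_from_below T C x y"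
  unfolding edge_from_below_def piece_l_def by auto

lemma efb_r: "edge_from_below T (piece_r C s) x y \<Longrightarrow> edge_from_below T C x y"
  unfolding edge_from_below_def piece_r_def by auto

lemma prefix_snoc:
  assumes "s @ w = x @ [b]" "\<not> (\<exists>u. x = s @ u)" shows "s = x @ [b]"
proof (cases w rule: rev_exhaust)
  case Nil
  then show ?thesis
    by (metis assms(1) append_Nil2)
next
  case (snoc w' c)
  then have "x = s @ w'" using assms(1) by simp
  then show ?thesis using assms(2) by blast
qed

lemma efb_p: "edge_from_below T (piece_p C s) x y \<Longrightarrow> edge_from_below T C x y \<or> y = s"
proof -
  assume a: "edge_from_below T (piece_p C s) x y"
  then obtain b where x: "x \<in> C" "\<not> (\<exists>w. x = s @ w)" "y \<notin> piece_p C s" "y \<in> nodes T" "y = x @ [b]"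
    unfolding edge_from_below_def piece_p_def by auto
  show ?thesis
  proof (cases "y \<in> C")
    case True
    then obtain w where "y = s @ w" using x(3) unfolding piece_p_def by auto
    then have "s = x @ [b]" using prefix_snoc x by metis
    then show ?thesis using x by simp
  next
    case False
    then show ?thesis using x unfolding edge_from_below_def by auto
  qed
qed

definition ob where "ob T C \<longleftrightarrow> (\<forall>x y x' y'. edge_from_below T C x y \<longrightarrow> edge_from_below T C x' y' \<longrightarrow> x = x')"

lemma ob_l: "ob T C \<Longrightarrow> ob T (piece_l C s)"
  unfolding ob_def using efb_l by blast

lemma ob_r: "ob T C \<Longrightarrow> ob T (piece_r C s)"
  unfolding ob_def using efb_r by blast

lemma ob_p:
  assumes "\<forall>x y. edge_from_below T C x y \<longrightarrow> (\<exists>w. x = s @ w)"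
  shows "ob T (piece_p C s)"
  unfolding ob_def
proof (intro allI impI)
  fix x y x' y'
  assume a: "edge_from_below T (piece_p C s) x y" "edge_from_below T (piece_p C s) x' y'"
  have nx: "\<not> (\<exists>w. x = s @ w)" "\<not> (\<exists>w. x' = s @ w)"
    using a unfolding edge_from_below_def piece_p_def by auto
  have "y = s" using efb_p[OF a(1)] assms nx by blast
  moreover have "y' = s" using efb_p[OF a(2)] assms nx by blast
  moreover obtain b b' where "y = x @ [b]" "y' = x' @ [b']"
    using a unfolding edge_from_below_def by auto
  ultimately show "x = x'" by (metis butlast_snoc)
qed

lemma centroid_nat:
  assumes "is_centroid C u"
  shows "2 * card (piece_l C u) \<le> card C" "2 * card (piece_r C u) \<le> card C"
    "2 * card (piece_p C u) \<le> card C"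
proof -
  have "real (card (piece_l C u)) \<le> real (card C) / 2"
    "real (card (piece_r C u)) \<le> real (card C) / 2"
    "real (card (piece_p C u)) \<le> real (card C) / 2"
    using assms unfolding is_centroid_def by auto
  then show "2 * card (piece_l C u) \<le> card C" "2 * card (piece_r C u) \<le> card C"
    "2 * card (piece_p C u) \<le> card C" by linarith+
qed

lemma lca_neq:
  assumes "x = s @ a # u" "c = s @ a # w"
  shows "lca x c \<noteq> s"
  using assms lca_append[of s "a # u" "a # w"] by simp

lemma size_edge:
  assumes ob: "ob T C" and e: "edge_from_below T C x0 y0" and cen: "is_centroid C c"
    and sd: "s = lca x0 c" and fin: "finite C"
    and P: "P \<in> {piece_l C s, piece_r C s, piece_p C s}"
  shows "2 * card P \<le> card C \<or> \<not> efb T P"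
proof -
  obtain w where cw: "c = s @ w" using lca_prefix2[of c x0] sd by blast
  note cn = centroid_nat[OF cen]
  have x0C: "\<forall>x y. edge_from_below T C x y \<longrightarrow> x = x0" using ob e unfolding ob_def by blast
  have pp: "2 * card (piece_p C s) \<le> card C"
  proof -
    have "piece_p C s \<subseteq> piece_p C c" unfolding piece_p_def cw by auto
    then have "card (piece_p C s) \<le> card (piece_p C c)"
      by (rule card_mono[rotated]) (use fin in \<open>simp add: piece_p_def\<close>)
    then show ?thesis using cn by simp
  qed
  have pl: "2 * card (piece_l C s) \<le> card C \<or> \<not> efb T (piece_l C s)"
  proof (cases w)
    case Nil
    then show ?thesis using cn cw by simp
  next
    case (Cons a w')
    show ?thesis
    proof (cases a)
      case True
      have cT: "c = s @ True # w'" using cw Cons True by simp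
      have "piece_l C s \<subseteq> piece_p C c" unfolding piece_p_def piece_l_def cT by auto
      then have "card (piece_l C s) \<le> card (piece_p C c)"
        by (rule card_mono[rotated]) (use fin in \<open>simp add: piece_p_def\<close>)
      then show ?thesis using cn by simp
    next
      case False
      have "\<not> efb T (piece_l C s)"
      proof
        assume "efb T (piece_l C s)"
        then obtain x y where ex: "edge_from_below T (piece_l C s) x y" by blast
        then have e2: "edge_from_below T C x y" by (rule efb_l)
        have xin: "x \<in> piece_l C s" using ex unfolding edge_from_below_def by simp
        have "x = x0" using x0C e2 by blast
        then obtain u where "x0 = s @ False # u" using xin unfolding piece_l_def by auto
        moreover have "c = s @ False # w'" using cw Cons False by simp
        ultimately show False using lca_neq sd by metis
      qed
      then show ?thesis by simp
    qed
  qed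
  have pr: "2 * card (piece_r C s) \<le> card C \<or> \<not> efb T (piece_r C s)"
  proof (cases w)
    case Nil
    then show ?thesis using cn cw by simp
  next
    case (Cons a w')
    show ?thesis
    proof (cases a)
      case False
      have cF: "c = s @ False # w'" using cw Cons False by simp
      have "piece_r C s \<subseteq> piece_p C c" unfolding piece_p_def piece_r_def cF by auto
      then have "card (piece_r C s) \<le> card (piece_p C c)"
        by (rule card_mono[rotated]) (use fin in \<open>simp add: piece_p_def\<close>)
      then show ?thesis using cn by simp
    next
      case True
      have "\<not> efb T (piece_r C s)"
      proof
        assume "efb T (piece_r C s)"
        then obtain x y where ex: "edge_from_below T (piece_r C s) x y" by blast
        then have e2: "edge_from_below T C x y" by (rule efb_r)
        have xin: "x \<in> piece_r C s" using ex unfolding edge_from_below_def by simp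
        have "x = x0" using x0C e2 by blast
        then obtain u where "x0 = s @ True # u" using xin unfolding piece_r_def by auto
        moreover have "c = s @ True # w'" using cw Cons True by simp
        ultimately show False using lca_neq sd by metis
      qed
      then show ?thesis by simp
    qed
  qed
  show ?thesis using P pp pl pr by auto
qed

lemma main:
  "is_mcd T C D \<Longrightarrow> ob T C \<Longrightarrow>
     2 ^ theight D \<le> card C ^ 2 * (if efb T C then 2 else 1)"
proof (induction rule: is_mcd.induct)
  case (1 C s Ps ts)
  have fin: "finite C" using 1(1) finite_nodes unfolding is_component_def
    by (meson rev_finite_subset)
  have cpos: "card C \<ge> 1" using 1(1) fin unfolding is_component_def
    by (simp add: Suc_leI card_gt_0_iff)
  define eC where "eC = (if efb T C then 2 else 1::nat)"
  have sub: "\<And>P. P \<in> {piece_l C s, piece_r C s, piece_p C s} \<Longrightarrow> P \<subseteq> C"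
    unfolding piece_l_def piece_r_def piece_p_def by auto
  have key: "\<And>P. P \<in> {piece_l C s, piece_r C s, piece_p C s} \<Longrightarrow>
      ob T P \<and> (2 * card P \<le> card C \<or> (\<not> efb T P \<and> efb T C))"
    using 1(2)
  proof (elim disjE exE conjE)
    fix P assume P: "P \<in> {piece_l C s, piece_r C s, piece_p C s}"
      and ne: "\<not> efb T C" and cen: "is_centroid C s"
    have "ob T (piece_p C s)" using ne by (intro ob_p) blast
    then have "ob T P" using P ob_l[OF 1(6)] ob_r[OF 1(6)] by auto
    moreover have "2 * card P \<le> card C" using P centroid_nat[OF cen] by auto
    ultimately show "ob T P \<and> (2 * card P \<le> card C \<or> (\<not> efb T P \<and> efb T C))" by simp
  next
    fix P x y c assume P: "P \<in> {piece_l C s, piece_r C s, piece_p C s}"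
      and e: "edge_from_below T C x y" and cen: "is_centroid C c" and sd: "s = lca x c"
    have "\<forall>x' y'. edge_from_below T C x' y' \<longrightarrow> (\<exists>w. x' = s @ w)"
    proof (intro allI impI)
      fix x' y' assume "edge_from_below T C x' y'"
      then have "x' = x" using 1(6) e unfolding ob_def by blast
      then show "\<exists>w. x' = s @ w" using lca_prefix[of x c] sd by simp
    qed
    then have "ob T (piece_p C s)" by (rule ob_p)
    then have "ob T P" using P ob_l[OF 1(6)] ob_r[OF 1(6)] by auto
    moreover have "2 * card P \<le> card C \<or> \<not> efb T P"
      using size_edge[OF 1(6) e cen sd fin P] .
    moreover have "efb T C" using e by blast
    ultimately show "ob T P \<and> (2 * card P \<le> card C \<or> (\<not> efb T P \<and> efb T C))" by blast
  qed
  have allb: "\<forall>t\<in>set ts. 2 ^ Suc (theight t) \<le> card C ^ 2 * eC"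
  proof
    fix t assume "t \<in> set ts"
    then obtain i where i: "i < length ts" "t = ts ! i" by (auto simp: in_set_conv_nth)
    define P where "P = Ps ! i"
    have iP: "i < length Ps" using i 1(4) by linarith
    have Pin: "P \<in> {piece_l C s, piece_r C s, piece_p C s}"
    proof -
      have "P \<in> set Ps" unfolding P_def using iP by (rule nth_mem)
      moreover have "set Ps \<subseteq> set [piece_l C s, piece_r C s, piece_p C s]"
        unfolding 1(3) by (rule filter_is_subset)
      ultimately have "P \<in> set [piece_l C s, piece_r C s, piece_p C s]" by (rule subsetD[rotated])
      then show ?thesis by (simp only: set_simps)
    qed
    have kP: "ob T P" "2 * card P \<le> card C \<or> (\<not> efb T P \<and> efb T C)" using key[OF Pin] by auto
    have IH: "2 ^ theight t \<le> card P ^ 2 * (if efb T P then 2 else 1)"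
      using 1(5) iP kP(1) i(2) P_def by blast
    have cPC: "card P \<le> card C" using sub[OF Pin] fin by (rule card_mono[rotated])
    show "2 ^ Suc (theight t) \<le> card C ^ 2 * eC"
    proof (cases "2 * card P \<le> card C")
      case True
      have "2 ^ Suc (theight t) \<le> 2 * (card P ^ 2 * 2)"
        using IH by (simp split: if_splits)
      also have "\<dots> = (2 * card P) ^ 2" by (simp add: power2_eq_square)
      also have "\<dots> \<le> card C ^ 2" using True by (rule power_mono) simp
      also have "\<dots> \<le> card C ^ 2 * eC" unfolding eC_def by simp
      finally show ?thesis .
    next
      case False
      then have "\<not> efb T P" "efb T C" using kP by auto
      then have "2 ^ Suc (theight t) \<le> 2 * card P ^ 2" using IH by simp
      also have "\<dots> \<le> 2 * card C ^ 2" using cPC by (simp add: power_mono)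
      also have "\<dots> = card C ^ 2 * eC" unfolding eC_def using \<open>efb T C\<close> by simp
      finally show ?thesis .
    qed
  qed
  have one: "card C ^ 2 * eC \<ge> 1" using cpos unfolding eC_def by simp
  have "2 ^ theight (TNode s ts) \<le> card C ^ 2 * eC" using theight_bound[OF one allb] .
  then show ?case unfolding eC_def .
qed

lemma efb_root: "\<not> efb T (nodes T)"
  unfolding edge_from_below_def by auto

lemma comp_root: "ob T (nodes T)"
  unfolding ob_def edge_from_below_def by auto

theorem lemma2:
  fixes T :: bt and D :: "bool list tern"
  assumes "is_mcd T (nodes T) D"
  shows "real (theight D) \<le> 2 + 2 * log 2 (real (leaves T))"
proof -
  define n where "n = leaves T"
  have cn: "card (nodes T) + 1 = 2 * n" using card_nodes n_def by simp
  have "2 ^ theight D \<le> card (nodes T) ^ 2 * (if efb T (nodes T) then 2 else 1)"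
    using main[OF assms comp_root] .
  then have "2 ^ theight D \<le> card (nodes T) ^ 2" using efb_root by simp
  also have "card (nodes T) ^ 2 \<le> (2 * n) ^ 2" using cn by (intro power_mono) linarith+
  finally have h: "2 ^ theight D \<le> (2 * n) ^ 2" .
  have npos: "n \<ge> 1" using cn by linarith
  have "real (2 ^ theight D) \<le> real ((2 * n) ^ 2)"
    using h by (simp only: of_nat_le_iff)
  then have h2: "(2::real) ^ theight D \<le> (2 * real n) ^ 2" by simp
  have rn: "real n > 0" using npos by simp
  have "real (theight D) = log 2 ((2::real) ^ theight D)" by (simp add: log_nat_power)
  also have "\<dots> \<le> log 2 ((2 * real n) ^ 2)"
    using h2 rn by (intro iffD2[OF log_le_cancel_iff]) auto
  also have "log 2 ((2 * real n) ^ 2) = 2 + 2 * log 2 (real n)"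
  proof -
    have "log 2 ((2 * real n) ^ 2) = 2 * log 2 (2 * real n)" using rn log_nat_power[of "2 * real n" 2 2] by simp
    also have "log 2 (2 * real n) = 1 + log 2 (real n)" using rn by (simp add: log_mult)
    finally show ?thesis by simp
  qed
  finally show ?thesis by (simp add: n_def)
qed

end
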